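(* Consider the equation $u_{tx}=u-i|u|^2u_x$. Let $k,\Omega,c\in\mathbb{R}$ with $c\neq0$, and let $\varphi,\theta:\mathbb{R}\to\mathbb{R}$ be smooth with $\varphi(y)\neq0$ for all $y$. Suppose $u(x,t)=\varphi(y)e^{i(kx-\Omega t+\theta(y))}$, $y=x-ct$, solves this equation. Then there exist constants $A,B\in\mathbb{R}$ such that $$\theta_y=\frac{\varphi^4-2ck\varphi^2-2\Omega\varphi^2+4A}{4c\varphi^2}$$ and $$\varphi_y^2=-\frac{1}{16c^2}V(\varphi),\qquad V(\varphi)=\frac{\varphi^8+c_3\varphi^6+c_2\varphi^4+c_1\varphi^2+c_0}{\varphi^2},$$ where $c_3=4ck-4\Omega$, $c_2=4\left(c^2k^2+\Omega^2+2A+c(4-2k\Omega)\right)$, $c_1=-32Bc$, $c_0=16A^2$. *)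

theory Defs
  imports "HOL-Analysis.Analysis"
begin

definition smooth_real :: "(real \<Rightarrow> real) \<Rightarrow> bool" where
  "smooth_real f \<longleftrightarrow> (\<forall>n x. ((deriv ^^ n) f) differentiable (at x))"

definition pdx :: "(real \<Rightarrow> real \<Rightarrow> complex) \<Rightarrow> real \<Rightarrow> real \<Rightarrow> complex" where
  "pdx u x t = vector_derivative (\<lambda>s. u s t) (at x)"

definition pdt :: "(real \<Rightarrow> real \<Rightarrow> complex) \<Rightarrow> real \<Rightarrow> real \<Rightarrow> complex" where
  "pdt u x t = vector_derivative (\<lambda>s. u x s) (at t)"

definition pdtx :: "(real \<Rightarrow> real \<Rightarrow> complex) \<Rightarrow> real \<Rightarrow> real \<Rightarrow> complex" where
  "pdtx u x t = pdx (pdt u) x t"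

end

theory Submission imports Defs begin

lemma expvd:
  assumes "(Q has_real_derivative Q') (at s)"
  shows "((\<lambda>s. exp (\<i> * complex_of_real (Q s))) has_vector_derivative
          (\<i> * complex_of_real Q' * exp (\<i> * complex_of_real (Q s)))) (at s)"
proof -
  have 1: "((\<lambda>s. \<i> * complex_of_real (Q s)) has_vector_derivative (\<i> * complex_of_real Q')) (at s)"
    by (intro derivative_intros assms)
  have "((exp \<circ> (\<lambda>s. \<i> * complex_of_real (Q s))) has_vector_derivative
          (\<i> * complex_of_real Q' * exp (\<i> * complex_of_real (Q s)))) (at s)"
    by (rule field_vector_diff_chain_at[OF 1]) (rule DERIV_exp)
  then show ?thesis by (simp add: o_def)
qed

lemma h2:
  assumes "(a has_real_derivative a') (at s)" "(b has_real_derivative b') (at s)"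
    "(Q has_real_derivative Q') (at s)"
  shows "((\<lambda>s. (complex_of_real (a s) + \<i> * complex_of_real (b s)) * exp (\<i> * complex_of_real (Q s)))
     has_vector_derivative
     ((complex_of_real a' + \<i> * complex_of_real b' + \<i> * complex_of_real Q' * (complex_of_real (a s) + \<i> * complex_of_real (b s)))
       * exp (\<i> * complex_of_real (Q s)))) (at s)"
proof -
  have "((\<lambda>s. (complex_of_real (a s) + \<i> * complex_of_real (b s)) * exp (\<i> * complex_of_real (Q s)))
     has_vector_derivative
     ((complex_of_real (a s) + \<i> * complex_of_real (b s)) * (\<i> * complex_of_real Q' * exp (\<i> * complex_of_real (Q s)))
      + (complex_of_real a' + \<i> * complex_of_real b') * exp (\<i> * complex_of_real (Q s)))) (at s)"
    by (intro has_vector_derivative_mult expvd assms derivative_intros)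
  then show ?thesis by (simp add: algebra_simps)
qed

lemma comp:
  assumes "\<And>z. (f has_real_derivative f' z) (at z)" "(g has_real_derivative g') (at s)"
  shows "((\<lambda>s. f (g s)) has_real_derivative f' (g s) * g') (at s)"
  using DERIV_chain2[OF assms(1) assms(2)] .

lemma sm:
  assumes "smooth_real f"
  shows "\<And>z. (f has_real_derivative deriv f z) (at z)" "\<And>z. (deriv f has_real_derivative deriv (deriv f) z) (at z)"
proof -
  fix z
  have "((deriv ^^ 0) f) differentiable (at z)" using assms unfolding smooth_real_def by blast
  then show "(f has_real_derivative deriv f z) (at z)" by (simp add: DERIV_deriv_iff_real_differentiable)
next
  fix z
  have "((deriv ^^ 1) f) differentiable (at z)" using assms unfolding smooth_real_def by blast
  then show "(deriv f has_real_derivative deriv (deriv f) z) (at z)" by (simp add: DERIV_deriv_iff_real_differentiable)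
qed

lemma main:
  fixes k \<Omega> c :: real and \<phi> \<theta> :: "real \<Rightarrow> real" and u :: "real \<Rightarrow> real \<Rightarrow> complex"
  assumes "c \<noteq> 0"
    and "smooth_real \<phi>" and "smooth_real \<theta>"
    and "\<And>y. \<phi> y \<noteq> 0"
    and u_def: "\<And>x t. u x t = complex_of_real (\<phi> (x - c * t)) *
                   exp (\<i> * complex_of_real (k * x - \<Omega> * t + \<theta> (x - c * t)))"
    and eq: "\<And>x t. pdtx u x t = u x t - \<i> * complex_of_real ((cmod (u x t))\<^sup>2) * pdx u x t"
  shows "\<And>y. - c * deriv (deriv \<phi>) y - (k + deriv \<theta> y) * (\<phi> y * (-\<Omega> - c * deriv \<theta> y))
              = \<phi> y + \<phi> y ^ 3 * (k + deriv \<theta> y)"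
    "\<And>y. deriv \<phi> y * (-\<Omega> - c * deriv \<theta> y) - c * (\<phi> y * deriv (deriv \<theta>) y)
          + (k + deriv \<theta> y) * (- c * deriv \<phi> y) = - (\<phi> y)\<^sup>2 * deriv \<phi> y"
proof -
  note p = sm[OF assms(2)] and th = sm[OF assms(3)]
  define E where "E x t = exp (\<i> * complex_of_real (k * x - \<Omega> * t + \<theta> (x - c * t)))" for x t
  have pdt: "pdt u x t = (complex_of_real (- c * deriv \<phi> (x - c * t))
     + \<i> * complex_of_real (\<phi> (x - c * t) * (-\<Omega> - c * deriv \<theta> (x - c * t)))) * E x t" for x t
  proof -
    have fe: "(\<lambda>s. u x s) = (\<lambda>s. (complex_of_real (\<phi> (x - c * s)) + \<i> * complex_of_real ((\<lambda>z::real. 0::real) s))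
        * exp (\<i> * complex_of_real (k * x - \<Omega> * s + \<theta> (x - c * s))))"
      by (simp add: u_def)
    have d: "((\<lambda>s. u x s) has_vector_derivative
       ((complex_of_real (deriv \<phi> (x - c * t) * (0 - c * 1)) + \<i> * complex_of_real 0
        + \<i> * complex_of_real (0 - \<Omega> * 1 + deriv \<theta> (x - c * t) * (0 - c * 1)) * (complex_of_real (\<phi> (x - c * t)) + \<i> * complex_of_real ((\<lambda>z::real. 0::real) t)))
       * exp (\<i> * complex_of_real (k * x - \<Omega> * t + \<theta> (x - c * t))))) (at t)"
      unfolding fe
      by (intro h2 comp[OF p(1)] comp[OF th(1)] derivative_intros DERIV_cmult[OF DERIV_ident])
    show ?thesis unfolding pdt_def E_def
      by (rule vector_derivative_at[OF d, THEN trans]) (simp add: algebra_simps)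
  qed
  fix y
  have fe2: "(\<lambda>s. pdt u s 0) = (\<lambda>s. (complex_of_real (- c * deriv \<phi> s)
     + \<i> * complex_of_real (\<phi> s * (-\<Omega> - c * deriv \<theta> s))) * exp (\<i> * complex_of_real (k * s + \<theta> s)))"
    by (simp add: pdt E_def)
  have d2: "((\<lambda>s. pdt u s 0) has_vector_derivative
     ((complex_of_real (- c * deriv (deriv \<phi>) y) + \<i> * complex_of_real (deriv \<phi> y * (-\<Omega> - c * deriv \<theta> y) + \<phi> y * (0 - c * deriv (deriv \<theta>) y))
      + \<i> * complex_of_real (k * 1 + deriv \<theta> y) * (complex_of_real (- c * deriv \<phi> y)
     + \<i> * complex_of_real (\<phi> y * (-\<Omega> - c * deriv \<theta> y)))) * exp (\<i> * complex_of_real (k * y + \<theta> y)))) (at y)"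
    unfolding fe2
  proof (intro h2 p th derivative_intros DERIV_cmult[OF DERIV_ident])
    show "((\<lambda>s. - c * deriv \<phi> s) has_real_derivative - c * deriv (deriv \<phi>) y) (at y)"
      by (intro DERIV_cmult p)
    show "((\<lambda>s. \<phi> s * (- \<Omega> - c * deriv \<theta> s)) has_real_derivative
      deriv \<phi> y * (- \<Omega> - c * deriv \<theta> y) + \<phi> y * (0 - c * deriv (deriv \<theta>) y)) (at y)"
      by (rule derivative_eq_intros p th refl)+ (simp add: algebra_simps)
  qed
  have fe3: "(\<lambda>s. u s 0) = (\<lambda>s. (complex_of_real (\<phi> s) + \<i> * complex_of_real ((\<lambda>z::real. 0::real) s)) * exp (\<i> * complex_of_real (k * s + \<theta> s)))"
    by (simp add: u_def)
  have d3: "((\<lambda>s. u s 0) has_vector_derivative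
     ((complex_of_real (deriv \<phi> y) + \<i> * complex_of_real 0
      + \<i> * complex_of_real (k * 1 + deriv \<theta> y) * (complex_of_real (\<phi> y) + \<i> * complex_of_real ((\<lambda>z::real. 0::real) y))) * exp (\<i> * complex_of_real (k * y + \<theta> y)))) (at y)"
    unfolding fe3
    by (intro h2 p th derivative_intros DERIV_cmult[OF DERIV_ident])
  have m: "cmod (u y 0) = \<bar>\<phi> y\<bar>" by (simp add: u_def norm_mult)
  have "pdtx u y 0 = u y 0 - \<i> * complex_of_real ((cmod (u y 0))\<^sup>2) * pdx u y 0" by (rule eq)
  hence "((complex_of_real (- c * deriv (deriv \<phi>) y) + \<i> * complex_of_real (deriv \<phi> y * (-\<Omega> - c * deriv \<theta> y) + \<phi> y * (0 - c * deriv (deriv \<theta>) y))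
      + \<i> * complex_of_real (k * 1 + deriv \<theta> y) * (complex_of_real (- c * deriv \<phi> y)
     + \<i> * complex_of_real (\<phi> y * (-\<Omega> - c * deriv \<theta> y))))) * exp (\<i> * complex_of_real (k * y + \<theta> y))
     = (complex_of_real (\<phi> y) - \<i> * complex_of_real ((\<phi> y)\<^sup>2) * (complex_of_real (deriv \<phi> y) + \<i> * complex_of_real 0
      + \<i> * complex_of_real (k * 1 + deriv \<theta> y) * (complex_of_real (\<phi> y) + \<i> * complex_of_real ((\<lambda>z::real. 0::real) y)))) * exp (\<i> * complex_of_real (k * y + \<theta> y))"
    unfolding pdtx_def pdx_def vector_derivative_at[OF d2] vector_derivative_at[OF d3] m
    by (simp add: u_def algebra_simps)
  hence ceq: "(complex_of_real (- c * deriv (deriv \<phi>) y) + \<i> * complex_of_real (deriv \<phi> y * (-\<Omega> - c * deriv \<theta> y) + \<phi> y * (0 - c * deriv (deriv \<theta>) y))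
      + \<i> * complex_of_real (k * 1 + deriv \<theta> y) * (complex_of_real (- c * deriv \<phi> y)
     + \<i> * complex_of_real (\<phi> y * (-\<Omega> - c * deriv \<theta> y))))
     = (complex_of_real (\<phi> y) - \<i> * complex_of_real ((\<phi> y)\<^sup>2) * (complex_of_real (deriv \<phi> y) + \<i> * complex_of_real 0
      + \<i> * complex_of_real (k * 1 + deriv \<theta> y) * (complex_of_real (\<phi> y) + \<i> * complex_of_real ((\<lambda>z::real. 0::real) y))))"
    by simp
  from arg_cong[OF ceq, of Re] show "- c * deriv (deriv \<phi>) y - (k + deriv \<theta> y) * (\<phi> y * (-\<Omega> - c * deriv \<theta> y))
              = \<phi> y + \<phi> y ^ 3 * (k + deriv \<theta> y)"
    by (simp add: power2_eq_square power3_eq_cube algebra_simps)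
  from arg_cong[OF ceq, of Im] show "deriv \<phi> y * (-\<Omega> - c * deriv \<theta> y) - c * (\<phi> y * deriv (deriv \<theta>) y)
          + (k + deriv \<theta> y) * (- c * deriv \<phi> y) = - (\<phi> y)\<^sup>2 * deriv \<phi> y"
    by (simp add: power2_eq_square algebra_simps)
qed

theorem mainTheorem4:
  fixes k \<Omega> c :: real and \<phi> \<theta> :: "real \<Rightarrow> real" and u :: "real \<Rightarrow> real \<Rightarrow> complex"
  assumes "c \<noteq> 0"
    and "smooth_real \<phi>" and "smooth_real \<theta>"
    and "\<And>y. \<phi> y \<noteq> 0"
    and u_def: "\<And>x t. u x t = complex_of_real (\<phi> (x - c * t)) *
                   exp (\<i> * complex_of_real (k * x - \<Omega> * t + \<theta> (x - c * t)))"
    and eq: "\<And>x t. pdtx u x t = u x t - \<i> * complex_of_real ((cmod (u x t))\<^sup>2) * pdx u x t"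
  shows "\<exists>A B :: real. \<forall>y.
           deriv \<theta> y = (\<phi> y ^ 4 - 2 * c * k * \<phi> y ^ 2 - 2 * \<Omega> * \<phi> y ^ 2 + 4 * A) / (4 * c * \<phi> y ^ 2)
         \<and> (deriv \<phi> y)\<^sup>2 = - (1 / (16 * c\<^sup>2)) *
             ((\<phi> y ^ 8 + (4 * c * k - 4 * \<Omega>) * \<phi> y ^ 6
               + 4 * (c\<^sup>2 * k\<^sup>2 + \<Omega>\<^sup>2 + 2 * A + c * (4 - 2 * k * \<Omega>)) * \<phi> y ^ 4
               + (- 32 * B * c) * \<phi> y ^ 2 + 16 * A\<^sup>2) / \<phi> y ^ 2)"
proof -
  note M = main[OF assms]
  note p = sm[OF assms(2)] and th = sm[OF assms(3)]
  define H where "H y = c * \<phi> y ^ 2 * deriv \<theta> y - \<phi> y ^ 4 / 4 + (\<Omega> + c * k) * \<phi> y ^ 2 / 2" for y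
  have dH: "(H has_real_derivative 0) (at y)" for y
  proof -
    have "(H has_real_derivative (c*(2*\<phi> y*deriv \<phi> y*deriv \<theta> y + \<phi> y^2*deriv (deriv \<theta>) y) - \<phi> y^3 * deriv \<phi> y + (\<Omega>+c*k)*\<phi> y*deriv \<phi> y)) (at y)"
      unfolding H_def[abs_def]
      by (auto intro!: derivative_eq_intros p th simp: algebra_simps power2_eq_square power3_eq_cube power4_eq_xxxx)
    moreover have "c*(2*\<phi> y*deriv \<phi> y*deriv \<theta> y + \<phi> y^2*deriv (deriv \<theta>) y) - \<phi> y^3 * deriv \<phi> y + (\<Omega>+c*k)*\<phi> y*deriv \<phi> y = 0"
      using M(2)[where y=y] by algebra
    ultimately show ?thesis by simp
  qed
  define A where "A = H 0"
  have HA: "H y = A" for y unfolding A_def using DERIV_isconst_all dH by blast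
  have t1: "deriv \<theta> y = (\<phi> y ^ 4 - 2 * c * k * \<phi> y ^ 2 - 2 * \<Omega> * \<phi> y ^ 2 + 4 * A) / (4 * c * \<phi> y ^ 2)" for y
    using HA[of y] assms(1) assms(4)[of y] unfolding H_def by (simp add: field_simps)
  have t1': "4 * c * \<phi> y ^ 2 * deriv \<theta> y = \<phi> y ^ 4 - 2 * c * k * \<phi> y ^ 2 - 2 * \<Omega> * \<phi> y ^ 2 + 4 * A" for y
    using t1[of y] assms(1) assms(4)[of y] by (simp add: field_simps)
  define c3 where "c3 = 4 * c * k - 4 * \<Omega>"
  define c2 where "c2 = 4 * (c\<^sup>2 * k\<^sup>2 + \<Omega>\<^sup>2 + 2 * A + c * (4 - 2 * k * \<Omega>))"
  define K where "K y = (deriv \<phi> y)\<^sup>2 + (\<phi> y ^ 6 + c3 * \<phi> y ^ 4 + c2 * \<phi> y ^ 2 + 16 * A\<^sup>2 / \<phi> y ^ 2) / (16 * c\<^sup>2)" for y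
  have dK: "(K has_real_derivative 0) (at y)" for y
  proof -
    have "(K has_real_derivative (2 * deriv \<phi> y * deriv (deriv \<phi>) y + (6 * \<phi> y ^ 5 * deriv \<phi> y + 4 * c3 * \<phi> y ^ 3 * deriv \<phi> y + 2 * c2 * \<phi> y * deriv \<phi> y - 32 * A\<^sup>2 * deriv \<phi> y / \<phi> y ^ 3) / (16 * c\<^sup>2))) (at y)"
      unfolding K_def[abs_def] using assms(1) assms(4)[of y]
      by (auto intro!: derivative_eq_intros p th simp: field_simps power2_eq_square power3_eq_cube)
    moreover have "2 * deriv \<phi> y * deriv (deriv \<phi>) y + (6 * \<phi> y ^ 5 * deriv \<phi> y + 4 * c3 * \<phi> y ^ 3 * deriv \<phi> y + 2 * c2 * \<phi> y * deriv \<phi> y - 32 * A\<^sup>2 * deriv \<phi> y / \<phi> y ^ 3) / (16 * c\<^sup>2) = 0"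
    proof -
      have "32 * c\<^sup>2 * \<phi> y ^ 3 * deriv \<phi> y * deriv (deriv \<phi>) y + (6 * \<phi> y ^ 8 * deriv \<phi> y + 4 * c3 * \<phi> y ^ 6 * deriv \<phi> y + 2 * c2 * \<phi> y ^ 4 * deriv \<phi> y - 32 * A\<^sup>2 * deriv \<phi> y) = 0"
        using M(1)[where y=y] t1'[of y] unfolding c2_def c3_def by algebra
      then show ?thesis using assms(1) assms(4)[of y] by (simp add: field_simps eval_nat_numeral)
    qed
    ultimately show ?thesis by simp
  qed
  define B where "B = c * K 0 / 2"
  have KB: "K y = 2 * B / c" for y unfolding B_def using DERIV_isconst_all[OF allI[OF dK]] assms(1) by simp
  show ?thesis
  proof (intro exI allI conjI)
    fix y
    show "deriv \<theta> y = (\<phi> y ^ 4 - 2 * c * k * \<phi> y ^ 2 - 2 * \<Omega> * \<phi> y ^ 2 + 4 * A) / (4 * c * \<phi> y ^ 2)" by (rule t1)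
    show "(deriv \<phi> y)\<^sup>2 = - (1 / (16 * c\<^sup>2)) *
             ((\<phi> y ^ 8 + (4 * c * k - 4 * \<Omega>) * \<phi> y ^ 6
               + 4 * (c\<^sup>2 * k\<^sup>2 + \<Omega>\<^sup>2 + 2 * A + c * (4 - 2 * k * \<Omega>)) * \<phi> y ^ 4
               + (- 32 * B * c) * \<phi> y ^ 2 + 16 * A\<^sup>2) / \<phi> y ^ 2)"
      using KB[of y] assms(1) assms(4)[of y] unfolding K_def c2_def[symmetric] c3_def[symmetric]
      apply (simp add: field_simps eval_nat_numeral)
      apply (rule mult_left_cancel[THEN iffD1, of c], assumption)
      by (simp add: algebra_simps)
  qed
qed

end
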